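(* There is an absolute constant $C>0$ such that for all sufficiently large positive integers $n\le m$ the following holds. For every fixed $\mathbf{y}\in\mathbb{C}^m$, if $\mathbf{x}\sim CN(0,\mathbf{I}_{m\times m}/m)$, then with probability at least $1-m\exp(-n/6)$, \[ \frac1m\|\mathrm{phase}(\mathbf{x}+\mathbf{y})-\mathrm{phase}(\mathbf{x})\|_1\le C\log m\,\max\Big(\|\mathbf{y}\|,\frac nm\Big). \]
   Context: For $z\in\mathbb{C}\setminus\{0\}$, $\mathrm{phase}(z)=z/|z|$, and for a vector $\mathrm{phase}$ acts entrywise. $\|\cdot\|_1$ is the sum of moduli of entries and $\|\cdot\|$ the Euclidean norm. $CN(0,\Sigma)$ is the complex normal distribution with real and imaginary parts independent $N(0,\Sigma/2)$. *)

theory Defs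
  imports "HOL-Probability.Probability"
begin

definition complex_normal :: "real \<Rightarrow> complex measure" where
  "complex_normal v =
     distr (density lborel (normal_density 0 (sqrt (v/2)))
              \<Otimes>\<^sub>M density lborel (normal_density 0 (sqrt (v/2))))
           borel (\<lambda>(a, b). Complex a b)"

text \<open>The distribution CN(0, I_m/m) on C^m; vectors in C^m are represented as
  functions nat \<Rightarrow> complex on the index set {..<m}.\<close>
definition gauss_vec :: "nat \<Rightarrow> (nat \<Rightarrow> complex) measure" where
  "gauss_vec m = (\<Pi>\<^sub>M i\<in>{..<m}. complex_normal (1 / real m))"

text \<open>phase z = z/|z|, i.e. sgn (with the convention sgn 0 = 0).\<close>
definition phase :: "complex \<Rightarrow> complex" where
  "phase z = z / complex_of_real (cmod z)"

definition norm1 :: "nat \<Rightarrow> (nat \<Rightarrow> complex) \<Rightarrow> real" where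
  "norm1 m v = (\<Sum>i<m. cmod (v i))"

definition norm2 :: "nat \<Rightarrow> (nat \<Rightarrow> complex) \<Rightarrow> real" where
  "norm2 m v = sqrt (\<Sum>i<m. (cmod (v i))\<^sup>2)"

end

theory Submission
  imports Defs
begin

lemma meas_Complex[measurable]:
  "(\<lambda>(a, b). Complex a b) \<in> borel_measurable (borel \<Otimes>\<^sub>M borel)"
proof -
  have "(\<lambda>(a, b). Complex a b) = (\<lambda>p. complex_of_real (fst p) + \<i> * complex_of_real (snd p))"
    by (auto simp: complex_eq_iff)
  moreover have "(\<lambda>p::real\<times>real. complex_of_real (fst p) + \<i> * complex_of_real (snd p)) \<in> borel_measurable (borel \<Otimes>\<^sub>M borel)"
    by measurable
  ultimately show ?thesis by simp
qed

lemma meas_Complex_D[measurable]: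
  "(\<lambda>(a, b). Complex a b) \<in> borel_measurable (density lborel f \<Otimes>\<^sub>M density lborel g)"
proof -
  have "sets (density lborel f \<Otimes>\<^sub>M density lborel g) = sets (borel \<Otimes>\<^sub>M borel)"
    by (intro sets_pair_measure_cong) auto
  from measurable_cong_sets[OF this refl] meas_Complex show ?thesis by simp
qed

lemma cn_prob: "v > 0 \<Longrightarrow> prob_space (complex_normal v)"
  unfolding complex_normal_def
  apply (rule prob_space.prob_space_distr)
   apply (rule prob_space_pair; rule prob_space_normal_density)
  by (auto intro: meas_Complex_D)

lemma nd_ball:
  assumes v: "v > 0"
  shows "emeasure (density lborel (normal_density 0 (sqrt (v/2)))) {a. \<bar>a\<bar> < r}
     \<le> ennreal (1 / sqrt (pi * v)) * ennreal (2 * max r 0)"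
proof -
  let ?c = "1 / sqrt (pi * v)"
  have le: "normal_density 0 (sqrt (v/2)) x \<le> ?c" for x
  proof -
    have "normal_density 0 (sqrt (v/2)) x = ?c * exp (-(x)\<^sup>2/ (2 * (sqrt (v/2))\<^sup>2))"
      using v by (simp add: normal_density_def real_sqrt_mult)
    also have "\<dots> \<le> ?c * 1" using v by (intro mult_left_mono) auto
    finally show ?thesis by simp
  qed
  have "emeasure (density lborel (normal_density 0 (sqrt (v/2)))) {a. \<bar>a\<bar> < r}
      = (\<integral>\<^sup>+ x. ennreal (normal_density 0 (sqrt (v/2)) x) * indicator {a. \<bar>a\<bar> < r} x \<partial>lborel)"
    by (rule emeasure_density) auto
  also have "\<dots> \<le> (\<integral>\<^sup>+ x. ennreal ?c * indicator {-r<..<r} x \<partial>lborel)"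
    by (intro nn_integral_mono) (auto simp: le ennreal_leI indicator_def abs_less_iff)
  also have "\<dots> = ennreal ?c * emeasure lborel {-r<..<r}"
    by (rule nn_integral_cmult_indicator) auto
  also have "\<dots> \<le> ennreal ?c * ennreal (2 * max r 0)"
    by (auto simp: emeasure_lborel_Ioo max_def)
  finally show ?thesis .
qed

lemma cn_ball:
  assumes v: "v > 0" and r: "r \<ge> 0"
  shows "emeasure (complex_normal v) {z. cmod z < r} \<le> ennreal (4 * r^2 / (pi * v))"
proof -
  let ?D = "density lborel (normal_density 0 (sqrt (v/2)))"
  interpret D: prob_space ?D using v by (intro prob_space_normal_density) auto
  have sub: "(\<lambda>(a, b). Complex a b) -` {z. cmod z < r} \<inter> space (?D \<Otimes>\<^sub>M ?D)
      \<subseteq> {a. \<bar>a\<bar> < r} \<times> {a. \<bar>a\<bar> < r}"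
    using abs_Re_le_cmod abs_Im_le_cmod
    by (auto simp: space_pair_measure) (smt (verit) abs_Re_le_cmod complex.sel)+
  have "emeasure (complex_normal v) {z. cmod z < r}
     = emeasure (?D \<Otimes>\<^sub>M ?D) ((\<lambda>(a, b). Complex a b) -` {z. cmod z < r} \<inter> space (?D \<Otimes>\<^sub>M ?D))"
    unfolding complex_normal_def
    by (rule emeasure_distr) (auto intro: meas_Complex_D)
  also have "\<dots> \<le> emeasure (?D \<Otimes>\<^sub>M ?D) ({a. \<bar>a\<bar> < r} \<times> {a. \<bar>a\<bar> < r})"
    by (intro emeasure_mono sub) auto
  also have "\<dots> = emeasure ?D {a. \<bar>a\<bar> < r} * emeasure ?D {a. \<bar>a\<bar> < r}"
    by (rule D.emeasure_pair_measure_Times) auto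
  also have "\<dots> \<le> (ennreal (1 / sqrt (pi * v)) * ennreal (2 * r)) * (ennreal (1 / sqrt (pi * v)) * ennreal (2 * r))"
    using nd_ball[OF v, of r] r by (intro mult_mono) (auto simp: max_def)
  also have "\<dots> = ennreal (4 * r^2 / (pi * v))"
    using v r by (simp add: ennreal_mult'[symmetric] power2_eq_square real_sqrt_mult)
       (simp add: algebra_simps)
  finally show ?thesis .
qed


definition Zf :: "complex \<Rightarrow> complex \<Rightarrow> real" where
  "Zf x y = cmod (phase (x + y) - phase x)"

lemma cmod_phase_le: "cmod (phase z) \<le> 1"
  by (cases "z = 0") (auto simp: phase_def norm_divide)

lemma Zf_le2: "Zf x y \<le> 2"
proof -
  have "Zf x y \<le> cmod (phase (x+y)) + cmod (phase x)" unfolding Zf_def by (rule norm_triangle_ineq4)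
  also have "\<dots> \<le> 2" using cmod_phase_le[of "x+y"] cmod_phase_le[of x] by simp
  finally show ?thesis .
qed

lemma Zf_nonneg: "0 \<le> Zf x y" by (simp add: Zf_def)

lemma aux_abs:
  fixes p q :: real
  assumes "p > 0" "q > 0"
  shows "p * \<bar>1/p - 1/q\<bar> = \<bar>q - p\<bar> / q"
proof -
  have "p * (1/p - 1/q) = (q - p) / q" using assms by (simp add: field_simps)
  then have "\<bar>p * (1/p - 1/q)\<bar> = \<bar>q - p\<bar> / q" using assms by simp
  then show ?thesis using assms by (simp add: abs_mult)
qed

lemma Zf_le_ratio:
  assumes x: "x \<noteq> 0"
  shows "Zf x y \<le> 2 * cmod y / cmod x"
proof (cases "x + y = 0")
  case True
  then have "y = - x" by (simp add: add_eq_0_iff)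
  then show ?thesis using x by (simp add: Zf_def phase_def norm_divide)
next
  case False
  have nx: "cmod x > 0" using x by simp
  have "phase (x + y) - phase x = ((x+y) / of_real (cmod (x+y)) - (x+y) / of_real (cmod x)) + y / of_real (cmod x)"
    by (simp add: phase_def diff_divide_distrib add_divide_distrib)
  then have "Zf x y \<le> cmod ((x+y) / of_real (cmod (x+y)) - (x+y) / of_real (cmod x)) + cmod (y / of_real (cmod x))"
    unfolding Zf_def by (metis norm_triangle_ineq)
  also have "cmod ((x+y) / of_real (cmod (x+y)) - (x+y) / of_real (cmod x))
       = cmod (x+y) * \<bar>1 / cmod (x+y) - 1 / cmod x\<bar>"
  proof -
    have "(x+y) / of_real (cmod (x+y)) - (x+y) / of_real (cmod x) = (x+y) * of_real (1 / cmod (x+y) - 1 / cmod x)"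
      by (simp add: divide_inverse right_diff_distrib of_real_inverse)
    then show ?thesis by (simp only: norm_mult norm_of_real)
  qed
  also have "\<dots> = \<bar>cmod x - cmod (x+y)\<bar> / cmod x"
    using False nx by (intro aux_abs) auto
  also have "\<bar>cmod x - cmod (x+y)\<bar> \<le> cmod y"
    by (metis abs_norm_cancel add_diff_cancel_left' norm_minus_commute norm_triangle_ineq3)
  then have "\<bar>cmod x - cmod (x+y)\<bar> / cmod x \<le> cmod y / cmod x"
    using nx by (simp add: divide_right_mono)
  finally show ?thesis using nx by (simp add: norm_divide)
qed

definition Wf :: "nat \<Rightarrow> real \<Rightarrow> real \<Rightarrow> real \<Rightarrow> real" where
  "Wf K a s t = 2*a* s + (\<Sum>k\<in>{1..K}. 2*a*2^k* s * (if t < 1/(2^(k-1)* s) then 1 else 0))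
     + (if t < 1/(2^K* s) then 2 else 0)"

lemma levels:
  fixes s a t :: real
  assumes s: "s > 0" and a: "a \<ge> 0" and t: "t \<ge> 1/(2^K* s)"
  shows "2*a/t \<le> 2*a* s + (\<Sum>k\<in>{1..K}. 2*a*2^k* s * (if t < 1/(2^(k-1)* s) then 1 else 0))"
  using t
proof (induction K)
  case 0
  have e: "2^0 * s = s" by simp
  have st: "1/s \<le> t" using 0 unfolding e .
  have tp: "t > 0" using s st by (meson divide_pos_pos less_le_trans zero_less_one)
  have "s * (1/s) \<le> s * t" using st s by (intro mult_left_mono) auto
  then have "1 \<le> s * t" using s by simp
  then have "1/t \<le> s" using tp by (simp add: divide_le_eq)
  then have "2*a*(1/t) \<le> 2*a* s" using a by (intro mult_left_mono) auto
  then show ?case using a by (simp add: sum_nonneg)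
next
  case (Suc K)
  have nn: "0 \<le> 2*a*2^(Suc K)* s * (if t < 1/(2^K* s) then 1 else 0)" using a s by simp
  show ?case
  proof (cases "t \<ge> 1/(2^K* s)")
    case True
    have "(\<Sum>k\<in>{1..Suc K}. 2*a*2^k* s * (if t < 1/(2^(k-1)* s) then 1 else 0))
        = (\<Sum>k\<in>{1..K}. 2*a*2^k* s * (if t < 1/(2^(k-1)* s) then 1 else 0)) + 2*a*2^(Suc K)* s * (if t < 1/(2^K* s) then 1 else 0)"
      by simp
    with Suc.IH[OF True] nn show ?thesis by linarith
  next
    case False
    have tp: "t > 0" using Suc.prems s by (smt (verit) divide_pos_pos mult_pos_pos zero_less_power)
    have "2*a/t \<le> 2*a*2^(Suc K)* s"
    proof -
      have "1/t \<le> 2^(Suc K)* s" using Suc.prems tp s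
        by (smt (verit, ccfv_SIG) divide_le_eq le_divide_eq mult.commute mult_pos_pos zero_less_power)
      then show ?thesis using a by (smt (verit) divide_inverse mult.assoc mult_left_mono inverse_eq_divide)
    qed
    also have "\<dots> = 2*a*2^(Suc K)* s * (if t < 1/(2^(Suc K - 1)* s) then 1 else 0)"
      using False by simp
    also have "\<dots> \<le> 2*a* s + (\<Sum>k\<in>{1..Suc K}. 2*a*2^k* s * (if t < 1/(2^(k-1)* s) then 1 else 0))"
    proof -
      have "(\<Sum>k\<in>{1..Suc K}. 2*a*2^k* s * (if t < 1/(2^(k-1)* s) then 1 else 0))
        = (\<Sum>k\<in>{1..K}. 2*a*2^k* s * (if t < 1/(2^(k-1)* s) then 1 else 0)) + 2*a*2^(Suc K)* s * (if t < 1/(2^(Suc K - 1)* s) then 1 else 0)"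
        by simp
      moreover have "0 \<le> (\<Sum>k\<in>{1..K}. 2*a*2^k* s * (if t < 1/(2^(k-1)* s) then 1 else 0))"
        using a s by (intro sum_nonneg) auto
      moreover have "0 \<le> 2*a* s" using a s by simp
      ultimately show ?thesis by linarith
    qed
    finally show ?thesis .
  qed
qed

lemma Zf_le_W:
  assumes s: "s > 0"
  shows "Zf x y \<le> Wf K (cmod y) s (cmod x)"
proof (cases "cmod x < 1/(2^K* s)")
  case True
  have "0 \<le> (\<Sum>k\<in>{1..K}. 2*cmod y*2^k* s * (if cmod x < 1/(2^(k-1)* s) then 1 else 0))"
    using s by (intro sum_nonneg) auto
  moreover have "0 \<le> 2*cmod y * s" using s by simp
  moreover have "Wf K (cmod y) s (cmod x) = 2*cmod y * s + (\<Sum>k\<in>{1..K}. 2*cmod y*2^k* s * (if cmod x < 1/(2^(k-1)* s) then 1 else 0)) + 2"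
    using True by (simp add: Wf_def)
  ultimately show ?thesis using Zf_le2[of x y] by linarith
next
  case False
  then have xp: "cmod x > 0" using s by (smt (verit) divide_pos_pos mult_pos_pos zero_less_power)
  have "Zf x y \<le> 2 * cmod y / cmod x" using xp by (intro Zf_le_ratio) auto
  also have "\<dots> \<le> 2*cmod y* s + (\<Sum>k\<in>{1..K}. 2*cmod y*2^k* s * (if cmod x < 1/(2^(k-1)* s) then 1 else 0))"
    using False s by (intro levels) auto
  also have "\<dots> \<le> Wf K (cmod y) s (cmod x)" using False unfolding Wf_def by simp
  finally show ?thesis .
qed


lemma sets_cn[measurable_cong]: "sets (complex_normal v) = sets borel"
  by (simp add: complex_normal_def)

lemma space_cn[simp]: "space (complex_normal v) = UNIV"
  by (simp add: complex_normal_def)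

lemma ball_m:
  assumes m: "m > 0" and r: "r \<ge> 0"
  shows "measure (complex_normal (1 / real m)) {z. cmod z < r} \<le> 4 * r^2 * real m"
proof -
  interpret M: prob_space "complex_normal (1 / real m)" using m by (intro cn_prob) auto
  have "ennreal (measure (complex_normal (1 / real m)) {z. cmod z < r})
      = emeasure (complex_normal (1 / real m)) {z. cmod z < r}"
    by (simp add: M.emeasure_eq_measure)
  also have "\<dots> \<le> ennreal (4 * r^2 / (pi * (1 / real m)))"
    using m r by (intro cn_ball) auto
  also have "4 * r^2 / (pi * (1 / real m)) \<le> 4 * r^2 * real m"
  proof -
    have "4 * r^2 / (pi * (1 / real m)) = (4 * r^2 * real m) / pi" by simp
    also have "\<dots> \<le> (4 * r^2 * real m) / 1" using pi_ge_two m
      by (intro divide_left_mono) auto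
    finally show ?thesis by simp
  qed
  finally have "ennreal (measure (complex_normal (1 / real m)) {z. cmod z < r}) \<le> ennreal (4 * r^2 * real m)"
    by (auto intro: ennreal_leI)
  then show ?thesis using m by (subst (asm) ennreal_le_iff) auto
qed

lemma geo_sum: "(\<Sum>k\<in>{1..K}. (1/2::real)^k) \<le> 1"
proof -
  have "(\<Sum>k\<in>{1..K}. (1/2::real)^k) = 1 - (1/2)^K"
    by (induction K) (auto simp: power_Suc)
  then show ?thesis by simp
qed

lemma sq_aux:
  fixes s x :: real
  assumes "s > 0" "s * s = x"
  shows "4 * (1/(2^j * s))^2 * x = 4 / 4^j"
proof -
  have p: "(2::real)^j * 2^j = 4^j" by (simp flip: power_mult_distrib)
  have "(2^j * s)^2 = 4^j * x" using assms(2) p by (simp add: power2_eq_square algebra_simps)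
  moreover have "x > 0" using assms by (metis mult_pos_pos)
  ultimately show ?thesis using assms by (simp add: power_divide)
qed

lemma EW_bound:
  assumes m: "m > 0" and a: "a \<ge> 0"
  defines "s \<equiv> sqrt (real m)"
  shows "integrable (complex_normal (1 / real m)) (\<lambda>z. Wf K a s (cmod z))"
    and "(\<integral>z. Wf K a s (cmod z) \<partial>complex_normal (1 / real m)) \<le> 34 * a * s + 8 / 4^K"
proof -
  let ?M = "complex_normal (1 / real m)"
  interpret M: prob_space ?M using m by (intro cn_prob) auto
  have sp: "s > 0" using m by (simp add: s_def)
  have ss: "s * s = real m" using m by (simp add: s_def)
  define A where "A k = {z::complex. cmod z < 1/(2^(k-1) * s)}" for k
  define B where "B = {z::complex. cmod z < 1/(2^K * s)}"
  have Weq: "Wf K a s (cmod z) = 2*a* s + (\<Sum>k\<in>{1..K}. (2*a*2^k * s) * indicator (A k) z) + 2 * indicator B z" for z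
    unfolding Wf_def A_def B_def by (intro arg_cong2[where f="(+)"] sum.cong refl) (simp_all add: indicator_def)
  have Ameas[measurable]: "A k \<in> sets borel" "B \<in> sets borel" for k
    unfolding A_def B_def by measurable
  have int_ind: "integrable ?M (indicator C :: complex \<Rightarrow> real)" if "C \<in> sets borel" for C
    using that M.emeasure_finite[of C] by (auto simp: sets_cn less_top[symmetric])
  have int1: "integrable ?M (\<lambda>z. (\<Sum>k\<in>{1..K}. (2*a*2^k * s) * indicator (A k) z))"
    apply (rule Bochner_Integration.integrable_sum)
    apply (rule Bochner_Integration.integrable_mult_right)
    apply (rule int_ind)
    apply (rule Ameas)
    done
  have int2: "integrable ?M (\<lambda>z. 2 * indicator B z :: real)"
    apply (rule Bochner_Integration.integrable_mult_right)
    apply (rule int_ind)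
    apply (rule Ameas)
    done
  show "integrable ?M (\<lambda>z. Wf K a s (cmod z))"
    unfolding Weq by (intro Bochner_Integration.integrable_add int1 int2) auto
  have "(\<integral>z. Wf K a s (cmod z) \<partial>?M) = 2*a* s + (\<Sum>k\<in>{1..K}. (2*a*2^k * s) * measure ?M (A k)) + 2 * measure ?M B"
  proof -
    let ?S = "\<lambda>z. (\<Sum>k\<in>{1..K}. (2*a*2^k * s) * indicator (A k) z) :: real"
    have intc: "integrable ?M (\<lambda>z. 2*a* s)" by simp
    have e1: "(\<integral>z. (2*a* s + ?S z) + 2 * indicator B z \<partial>?M) = (\<integral>z. 2*a* s + ?S z \<partial>?M) + (\<integral>z. 2 * indicator B z \<partial>?M)"
      by (rule Bochner_Integration.integral_add[OF Bochner_Integration.integrable_add[OF intc int1] int2])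
    have e2: "(\<integral>z. 2*a* s + ?S z \<partial>?M) = (\<integral>z. 2*a* s \<partial>?M) + (\<integral>z. ?S z \<partial>?M)"
      by (rule Bochner_Integration.integral_add[OF intc int1])
    have e3: "(\<integral>z. 2*a* s \<partial>?M) = 2*a* s" using M.prob_space by simp
    have e4: "(\<integral>z. ?S z \<partial>?M) = (\<Sum>k\<in>{1..K}. (2*a*2^k * s) * measure ?M (A k))"
      by (subst Bochner_Integration.integral_sum) (auto intro: int_ind Ameas)
    have e5: "(\<integral>z. 2 * indicator B z \<partial>?M) = 2 * measure ?M B" by simp
    show ?thesis unfolding Weq e1 e2 e3 e4 e5 ..
  qed
  also have "\<dots> \<le> 2*a* s + (\<Sum>k\<in>{1..K}. 32 * a * s * (1/2)^k) + 8 / 4^K"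
  proof -
    have "(2*a*2^k * s) * measure ?M (A k) \<le> 32 * a * s * (1/2)^k" if k1: "k \<ge> 1" for k
    proof -
      have "measure ?M (A k) \<le> 4 * (1/(2^(k-1) * s))^2 * real m"
        unfolding A_def using m sp by (intro ball_m) auto
      also have "\<dots> = 4 / 4^(k-1)"
        using sp ss by (rule sq_aux)
      finally have "(2*a*2^k * s) * measure ?M (A k) \<le> (2*a*2^k * s) * (4 / 4^(k-1))"
        using a sp by (intro mult_left_mono) auto
      also have "\<dots> = 32 * a * s * (1/2)^k"
      proof -
        obtain j where k: "k = Suc j" using k1 by (cases k) auto
        have p: "(2::real)^(j+j) = 4^j" by (simp add: power_add flip: power_mult_distrib)
        show ?thesis unfolding k using p by (simp add: field_simps power_mult_distrib flip: power_add)
      qed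
      finally show ?thesis .
    qed
    then have "(\<Sum>k\<in>{1..K}. (2*a*2^k * s) * measure ?M (A k)) \<le> (\<Sum>k\<in>{1..K}. 32 * a * s * (1/2)^k)"
      by (intro sum_mono) auto
    moreover have "2 * measure ?M B \<le> 8 / 4^K"
    proof -
      have "measure ?M B \<le> 4 * (1/(2^K * s))^2 * real m"
        unfolding B_def using m sp by (intro ball_m) auto
      also have "\<dots> = 4 / 4^K"
        using sp ss by (rule sq_aux)
      finally show ?thesis by simp
    qed
    ultimately show ?thesis by linarith
  qed
  also have "(\<Sum>k\<in>{1..K}. 32 * a * s * (1/2::real)^k) \<le> 32 * a * s"
  proof -
    have "(\<Sum>k\<in>{1..K}. 32 * a * s * (1/2::real)^k) = 32 * a * s * (\<Sum>k\<in>{1..K}. (1/2::real)^k)"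
      by (simp add: sum_distrib_left)
    also have "\<dots> \<le> 32 * a * s * 1" using a sp geo_sum[of K] by (intro mult_left_mono) auto
    finally show ?thesis by simp
  qed
  finally show "(\<integral>z. Wf K a s (cmod z) \<partial>?M) \<le> 34 * a * s + 8 / 4^K" by simp
qed


lemma exp_Z_le:
  fixes Z W :: real
  assumes "0 \<le> Z" "Z \<le> 2" "Z \<le> W"
  shows "exp Z \<le> 1 + 9 * W"
proof -
  have "1 + (-Z) \<le> exp (-Z)" by (rule exp_ge_add_one_self)
  then have "(1 - Z) * exp Z \<le> exp (-Z) * exp Z" by (intro mult_right_mono) auto
  then have "exp Z - Z * exp Z \<le> 1" by (simp add: exp_minus field_simps)
  moreover have "exp Z \<le> 9"
  proof -
    have "exp Z \<le> exp 2" using assms by simp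
    also have "exp (2::real) = exp 1 * exp 1" by (simp flip: exp_add)
    also have "\<dots> \<le> 3 * 3" using exp_le by (intro mult_mono) auto
    finally show ?thesis by simp
  qed
  then have "Z * exp Z \<le> Z * 9" using assms by (intro mult_left_mono) auto
  ultimately show ?thesis using assms by linarith
qed

lemma Wf_nonneg:
  assumes "a \<ge> 0" "s > 0"
  shows "0 \<le> Wf K a s t"
  unfolding Wf_def using assms by (intro add_nonneg_nonneg sum_nonneg) auto

lemma coord_bound:
  assumes m: "m > 0"
  defines "s \<equiv> sqrt (real m)"
  shows "(\<integral>\<^sup>+ z. ennreal (exp (Zf z y)) \<partial>complex_normal (1 / real m))
     \<le> ennreal (exp (9 * (34 * cmod y * s + 8 / 4^K)))"
proof -
  let ?M = "complex_normal (1 / real m)"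
  interpret M: prob_space ?M using m by (intro cn_prob) auto
  have sp: "s > 0" using m by (simp add: s_def)
  note EW = EW_bound[OF m norm_ge_zero[of y], of K, folded s_def]
  have intW: "integrable ?M (\<lambda>z. 1 + 9 * Wf K (cmod y) s (cmod z))"
    using EW(1) by (intro Bochner_Integration.integrable_add Bochner_Integration.integrable_mult_right) auto
  have "(\<integral>\<^sup>+ z. ennreal (exp (Zf z y)) \<partial>?M) \<le> (\<integral>\<^sup>+ z. ennreal (1 + 9 * Wf K (cmod y) s (cmod z)) \<partial>?M)"
    by (intro nn_integral_mono ennreal_leI exp_Z_le Zf_nonneg Zf_le2 Zf_le_W sp)
  also have "\<dots> = ennreal (\<integral>z. 1 + 9 * Wf K (cmod y) s (cmod z) \<partial>?M)"
  proof (rule nn_integral_eq_integral[OF intW])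
    have "0 \<le> 1 + 9 * Wf K (cmod y) s (cmod z)" for z using Wf_nonneg[OF norm_ge_zero sp, of K y "cmod z"] by linarith
    then show "AE z in ?M. 0 \<le> 1 + 9 * Wf K (cmod y) s (cmod z)" by simp
  qed
  also have "(\<integral>z. 1 + 9 * Wf K (cmod y) s (cmod z) \<partial>?M) = 1 + 9 * (\<integral>z. Wf K (cmod y) s (cmod z) \<partial>?M)"
    using EW(1) M.prob_space by (subst Bochner_Integration.integral_add) auto
  also have "\<dots> \<le> 1 + 9 * (34 * cmod y * s + 8 / 4^K)" using EW(2) by simp
  also have "\<dots> \<le> exp (9 * (34 * cmod y * s + 8 / 4^K))" by (rule exp_ge_add_one_self)
  finally show ?thesis by (simp add: ennreal_leI)
qed


lemma Zf_meas[measurable]: "(\<lambda>z. Zf z c) \<in> borel_measurable borel"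
  unfolding Zf_def phase_def by measurable

lemma Zf_meas_cn: "(\<lambda>z. Zf z c) \<in> borel_measurable (complex_normal v)"
  using Zf_meas measurable_cong_sets[OF sets_cn[of v] refl] by blast

lemma S_meas[measurable]:
  "(\<lambda>x. \<Sum>i<m. Zf (x i) (y i)) \<in> borel_measurable (gauss_vec m)"
  unfolding gauss_vec_def
proof (intro borel_measurable_sum)
  fix i assume "i \<in> {..<m}"
  then have "(\<lambda>x. x i) \<in> (\<Pi>\<^sub>M i\<in>{..<m}. complex_normal (1 / real m)) \<rightarrow>\<^sub>M complex_normal (1 / real m)"
    by (rule measurable_component_singleton)
  then show "(\<lambda>x. Zf (x i) (y i)) \<in> borel_measurable (\<Pi>\<^sub>M i\<in>{..<m}. complex_normal (1 / real m))"
    using Zf_meas_cn by (rule measurable_compose)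
qed

lemma tail_bound:
  fixes y :: "nat \<Rightarrow> complex"
  assumes m: "m > 0"
  defines "s \<equiv> sqrt (real m)"
  defines "B \<equiv> (\<Sum>i<m. 9 * (34 * cmod (y i) * s + 8 / 4^m))"
  shows "measure (gauss_vec m) {x \<in> space (gauss_vec m). T \<le> (\<Sum>i<m. Zf (x i) (y i))} \<le> exp (B - T)"
proof -
  let ?M = "complex_normal (1 / real m)"
  let ?G = "gauss_vec m"
  let ?S = "\<lambda>x. \<Sum>i<m. Zf (x i) (y i)"
  let ?E = "{x \<in> space ?G. T \<le> ?S x}"
  have cnp: "prob_space ?M" using m by (intro cn_prob) auto
  interpret G: prob_space ?G unfolding gauss_vec_def by (intro prob_space_PiM cnp)
  interpret P: product_sigma_finite "\<lambda>_. ?M"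
    unfolding product_sigma_finite_def using cnp prob_space_imp_sigma_finite by blast
  have Emeas: "?E \<in> sets ?G" by measurable
  have "emeasure ?G ?E * ennreal (exp T) = (\<integral>\<^sup>+ x. ennreal (exp T) * indicator ?E x \<partial>?G)"
    using Emeas by (simp add: nn_integral_cmult_indicator mult.commute)
  also have "\<dots> \<le> (\<integral>\<^sup>+ x. ennreal (exp (?S x)) \<partial>?G)"
    by (intro nn_integral_mono) (auto simp: indicator_def intro!: ennreal_leI)
  also have "\<dots> = (\<integral>\<^sup>+ x. (\<Prod>i\<in>{..<m}. (\<lambda>i z. ennreal (exp (Zf z (y i)))) i (x i)) \<partial>?G)"
    by (intro nn_integral_cong) (simp add: exp_sum prod_ennreal)
  also have "\<dots> = (\<Prod>i\<in>{..<m}. (\<integral>\<^sup>+ z. ennreal (exp (Zf z (y i))) \<partial>?M))"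
    unfolding gauss_vec_def
    by (rule P.product_nn_integral_prod) (auto intro: Zf_meas_cn)
  also have "\<dots> \<le> (\<Prod>i\<in>{..<m}. ennreal (exp (9 * (34 * cmod (y i) * s + 8 / 4^m))))"
    by (intro prod_mono_ennreal) (unfold s_def, rule coord_bound[OF m])
  also have "\<dots> = ennreal (exp B)"
    by (simp add: prod_ennreal B_def exp_sum)
  finally have le: "emeasure ?G ?E * ennreal (exp T) \<le> ennreal (exp B)" .
  have "ennreal (measure ?G ?E * exp T) = emeasure ?G ?E * ennreal (exp T)"
    by (simp add: G.emeasure_eq_measure ennreal_mult)
  with le have "ennreal (measure ?G ?E * exp T) \<le> ennreal (exp B)" by simp
  then have "measure ?G ?E * exp T \<le> exp B" by (subst (asm) ennreal_le_iff) auto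
  then have "measure ?G ?E \<le> exp B / exp T" by (simp add: le_divide_eq)
  then show ?thesis by (simp add: exp_diff)
qed


lemma cs_sum:
  fixes y :: "nat \<Rightarrow> complex"
  shows "(\<Sum>i<m. cmod (y i)) \<le> sqrt (real m) * norm2 m y"
proof -
  have "(\<Sum>i<m. 1 * cmod (y i))\<^sup>2 \<le> (\<Sum>i<m. 1\<^sup>2) * (\<Sum>i<m. (cmod (y i))\<^sup>2)"
    by (rule Cauchy_Schwarz_ineq_sum)
  then have "(\<Sum>i<m. cmod (y i))\<^sup>2 \<le> real m * (\<Sum>i<m. (cmod (y i))\<^sup>2)" by simp
  then have "(\<Sum>i<m. cmod (y i)) \<le> sqrt (real m * (\<Sum>i<m. (cmod (y i))\<^sup>2))"
    by (rule real_le_rsqrt)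
  then show ?thesis by (simp add: norm2_def real_sqrt_mult)
qed

lemma m_le_4pow: "real m / 4^m \<le> 1"
proof -
  have "m < 2^m" by (rule less_exp)
  also have "(2::nat)^m \<le> 4^m" by (simp add: power_mono)
  finally have "real m \<le> 4^m" by (metis less_imp_le of_nat_le_iff of_nat_numeral of_nat_power)
  then show ?thesis by simp
qed

lemma B_bound:
  fixes y :: "nat \<Rightarrow> complex"
  assumes m: "m > 0"
  shows "(\<Sum>i<m. 9 * (34 * cmod (y i) * sqrt (real m) + 8 / 4^m)) \<le> 306 * real m * norm2 m y + 72"
proof -
  let ?s = "sqrt (real m)"
  have "(\<Sum>i<m. 9 * (34 * cmod (y i) * ?s + 8 / 4^m)) = 306 * ?s * (\<Sum>i<m. cmod (y i)) + 72 * (real m / 4^m)"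
  proof -
    have "(\<Sum>i<m. 9 * (34 * cmod (y i) * ?s + 8 / 4^m)) = (\<Sum>i<m. 306 * ?s * cmod (y i) + 72 / 4^m)"
      by (intro sum.cong) (auto simp: algebra_simps)
    also have "\<dots> = (\<Sum>i<m. 306 * ?s * cmod (y i)) + (\<Sum>i<m. 72 / 4^m)"
      by (rule sum.distrib)
    also have "\<dots> = 306 * ?s * (\<Sum>i<m. cmod (y i)) + 72 * (real m / 4^m)"
      by (simp add: sum_distrib_left)
    finally show ?thesis .
  qed
  also have "\<dots> \<le> 306 * ?s * (?s * norm2 m y) + 72 * 1"
    using cs_sum[where m=m and y=y] m_le_4pow[of m] by (intro add_mono mult_left_mono) auto
  also have "306 * ?s * (?s * norm2 m y) + 72 * 1 = 306 * real m * norm2 m y + 72" by (simp flip: mult.assoc)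
  finally show ?thesis .
qed

theorem lemma2:
  "\<exists>C>0. \<exists>N::nat. \<forall>n m::nat. N \<le> n \<longrightarrow> n \<le> m \<longrightarrow>
     (\<forall>y :: nat \<Rightarrow> complex.
        measure (gauss_vec m)
          {x \<in> space (gauss_vec m).
             norm1 m (\<lambda>i. phase (x i + y i) - phase (x i)) / real m
               \<le> C * ln (real m) * max (norm2 m y) (real n / real m)}
        \<ge> 1 - real m * exp (- real n / 6))"
proof (rule exI[of _ "400::real"], rule conjI, simp, intro exI[of _ "3::nat"] allI impI)
  fix n m :: nat and y :: "nat \<Rightarrow> complex"
  assume n3: "3 \<le> n" and nm: "n \<le> m"
  have m: "m > 0" using n3 nm by simp
  let ?G = "gauss_vec m"
  let ?S = "\<lambda>x. \<Sum>i<m. Zf (x i) (y i)"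
  let ?R = "400 * ln (real m) * max (norm2 m y) (real n / real m)"
  define B where "B = (\<Sum>i<m. 9 * (34 * cmod (y i) * sqrt (real m) + 8 / 4^m))"
  define T where "T = real n / 6 + B"
  let ?E = "{x \<in> space ?G. T \<le> ?S x}"
  have cnp: "prob_space (complex_normal (1 / real m))" using m by (intro cn_prob) auto
  interpret G: prob_space ?G unfolding gauss_vec_def by (intro prob_space_PiM cnp)
  have PE: "measure ?G ?E \<le> exp (- real n / 6)"
    using tail_bound[OF m, of T y] unfolding B_def T_def by simp
  have good_eq: "{x \<in> space ?G. norm1 m (\<lambda>i. phase (x i + y i) - phase (x i)) / real m \<le> ?R}
      = {x \<in> space ?G. ?S x / real m \<le> ?R}"
    by (simp add: norm1_def Zf_def)
  have good_meas: "{x \<in> space ?G. ?S x / real m \<le> ?R} \<in> sets ?G" by measurable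
  have Emeas: "?E \<in> sets ?G" by measurable
  have lnm: "1 \<le> ln (real m)"
  proof -
    have "exp 1 \<le> (3::real)" by (rule exp_le)
    also have "3 \<le> real m" using n3 nm by simp
    finally show ?thesis using m by (simp add: ln_ge_iff)
  qed
  have TR: "T \<le> ?R * real m"
  proof -
    have n1: "1 \<le> real n" using n3 by simp
    have "0 \<le> norm2 m y" by (simp add: norm2_def sum_nonneg)
    then have mx: "0 \<le> max (norm2 m y) (real n / real m)" by (simp add: le_max_iff_disj)
    have "T \<le> real n / 6 + 306 * real m * norm2 m y + 72" unfolding T_def B_def using B_bound[OF m, of y] by simp
    also have "\<dots> \<le> 379 * (real m * max (norm2 m y) (real n / real m))"
    proof -
      have a: "real m * norm2 m y \<le> real m * max (norm2 m y) (real n / real m)"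
        by (intro mult_left_mono) auto
      have b: "real n \<le> real m * max (norm2 m y) (real n / real m)"
      proof -
        have "real n = real m * (real n / real m)" using m by simp
        also have "\<dots> \<le> real m * max (norm2 m y) (real n / real m)" by (intro mult_left_mono) auto
        finally show ?thesis .
      qed
      show ?thesis using a b n1 by linarith
    qed
    also have "\<dots> \<le> 400 * ln (real m) * (real m * max (norm2 m y) (real n / real m))"
    proof -
      have "379 \<le> 400 * ln (real m)" using lnm by linarith
      then show ?thesis using mx by (intro mult_right_mono) auto
    qed
    finally show ?thesis by (simp add: algebra_simps)
  qed
  have sub: "space ?G - ?E \<subseteq> {x \<in> space ?G. ?S x / real m \<le> ?R}"
  proof
    fix x assume x: "x \<in> space ?G - ?E"
    then have "?S x < T" by auto
    then have "?S x < ?R * real m" using TR by linarith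
    then have "?S x / real m < ?R" using m by (simp add: divide_less_eq)
    then show "x \<in> {x \<in> space ?G. ?S x / real m \<le> ?R}" using x by auto
  qed
  have "1 - real m * exp (- real n / 6) \<le> 1 - exp (- real n / 6)"
  proof -
    have "1 * exp (- real n / 6) \<le> real m * exp (- real n / 6)" using m by (intro mult_right_mono) auto
    then show ?thesis by simp
  qed
  also have "\<dots> \<le> 1 - measure ?G ?E" using PE by simp
  also have "\<dots> = measure ?G (space ?G - ?E)" using Emeas by (simp add: G.prob_compl)
  also have "\<dots> \<le> measure ?G {x \<in> space ?G. ?S x / real m \<le> ?R}"
    by (rule G.finite_measure_mono[OF sub good_meas])
  finally show "1 - real m * exp (- real n / 6) \<le> measure ?G {x \<in> space ?G. norm1 m (\<lambda>i. phase (x i + y i) - phase (x i)) / real m \<le> ?R}"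
    unfolding good_eq .
qed

end
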